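(* $$\sum_{k=1}^\infty\frac{12635k^2-5259k+832}{k\binom{4k}k}\left(\frac 98\right)^{k-1}=1944+\frac{640}{\sqrt3}\pi.$$ *)

theory Defs
  imports "HOL-Analysis.Analysis"
begin

end

theory Submission
  imports Defs
begin

definition qp :: "real \<Rightarrow> real" where "qp x = 9*x^4 - 27*x^3 + 27*x^2 - 9*x + 8"
definition dq :: "real \<Rightarrow> real" where "dq x = 36*x^3 - 81*x^2 + 54*x - 9"
definition R4 :: "real \<Rightarrow> real" where
 "R4 x = 324*x^7 - 2997*x^6 + 10206*x^5 - 30390*x^4 + 63396*x^3 - 70677*x^2 + 35970*x - 7880"
definition dR4 :: "real \<Rightarrow> real" where
 "dR4 x = 2268*x^6 - 17982*x^5 + 51030*x^4 - 121560*x^3 + 190188*x^2 - 141354*x + 35970"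
definition tt :: "real \<Rightarrow> real" where "tt x = 9/8*x*(1-x)^3"
definition Ff :: "real \<Rightarrow> real" where
 "Ff x = (1-x)^3*(25270/(1-tt x)^3 - 17894/(1-tt x)^2 + 832/(1-tt x))"
definition Phi :: "real \<Rightarrow> real" where
 "Phi x = 64/3 * R4 x / (qp x)^2 - 1664/9 * ln (qp x) + 1920/sqrt 3 * arctan (sqrt 3 * x)"

lemma qp_factor: "qp x = (3*x^2+1)*(3*(x-3/2)^2+5/4)"
  unfolding qp_def by (simp add: algebra_simps power2_eq_square power3_eq_cube power4_eq_xxxx)

lemma qp_pos: "qp x > 0"
proof -
  have "3*x^2+1 > 0" by (simp add: add_nonneg_pos)
  moreover have "3*(x-3/2)^2+5/4 > (0::real)" by (simp add: add_nonneg_pos)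
  ultimately show ?thesis unfolding qp_factor by simp
qed

lemma tt_eq: "1 - tt x = qp x / 8"
  unfolding tt_def qp_def by (simp add: field_simps power2_eq_square power3_eq_cube power4_eq_xxxx)

lemma qp_deriv: "(qp has_real_derivative dq x) (at x)"
  unfolding qp_def[abs_def] dq_def
  by (auto intro!: derivative_eq_intros simp: algebra_simps power2_eq_square power3_eq_cube)

lemma R4_deriv: "(R4 has_real_derivative dR4 x) (at x)"
  unfolding R4_def[abs_def] dR4_def
  by (auto intro!: derivative_eq_intros simp: algebra_simps)

lemma Ff_eq: "Ff x = (1-x)^3*(25270*512/qp x^3 - 17894*64/qp x^2 + 832*8/qp x)"
  unfolding Ff_def tt_eq using qp_pos[of x] by (simp add: field_simps)

lemma poly_id: "3*(dR4 x * qp x - 2 * R4 x * dq x)*(1+3*x^2)*64 - 1664 * dq x * (qp x)^2 *(1+3*x^2) + 17280 * (qp x)^3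
   = 9 * (1+3*x^2) * (1-x)^3*(25270*512 - 17894*64*qp x + 832*8*qp x^2)"
  unfolding dR4_def qp_def R4_def dq_def by algebra


definition Dphi :: "real \<Rightarrow> real" where
  "Dphi x = 64/3*(dR4 x * qp x - 2 * R4 x * dq x)/qp x^3 - 1664/9 * dq x / qp x + 1920/(1+3*x^2)"

lemma Phi_deriv: "(Phi has_real_derivative Dphi x) (at x)"
proof -
  have q: "qp x > 0" by (rule qp_pos)
  have a: "((\<lambda>x. R4 x / qp x ^ 2) has_real_derivative
      (dR4 x * qp x^2 - R4 x * (of_nat 2 * (dq x * qp x ^ (2 - Suc 0))))/(qp x^2 * qp x^2)) (at x)"
    by (rule DERIV_divide[OF R4_deriv DERIV_power[OF qp_deriv]]) (use q in simp)
  have b: "((\<lambda>x. ln (qp x)) has_real_derivative (1/qp x) * dq x) (at x)"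
    by (rule DERIV_chain2[OF DERIV_ln_divide[OF q] qp_deriv])
  have c: "((\<lambda>x. arctan (sqrt 3 * x)) has_real_derivative
      inverse (1 + (sqrt 3 * x)^2) * (sqrt 3 * 1)) (at x)"
    by (rule DERIV_chain2[OF DERIV_arctan DERIV_cmult[OF DERIV_ident]])
  have d: "(Phi has_real_derivative
      64/3 * ((dR4 x * qp x^2 - R4 x * (of_nat 2 * (dq x * qp x ^ (2 - Suc 0))))/(qp x^2 * qp x^2))
      - 1664/9 * ((1/qp x) * dq x) + 1920/sqrt 3 * (inverse (1 + (sqrt 3 * x)^2) * (sqrt 3 * 1))) (at x)"
    unfolding Phi_def[abs_def] times_divide_eq_right[symmetric]
    by (intro DERIV_add DERIV_diff DERIV_cmult a b c)
  have e: "64/3 * ((dR4 x * qp x^2 - R4 x * (of_nat 2 * (dq x * qp x ^ (2 - Suc 0))))/(qp x^2 * qp x^2))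
      - 1664/9 * ((1/qp x) * dq x) + 1920/sqrt 3 * (inverse (1 + (sqrt 3 * x)^2) * (sqrt 3 * 1)) = Dphi x"
  proof -
    have "1920/sqrt 3 * (inverse (1 + (sqrt 3 * x)^2) * (sqrt 3 * 1)) = 1920/(1+3*x^2)"
    proof -
      have "inverse (1 + (sqrt 3 * x)^2) = 1/(1+3*x^2)" by (simp add: power_mult_distrib inverse_eq_divide)
      then show ?thesis by simp
    qed
    moreover have "64/3 * ((dR4 x * qp x^2 - R4 x * (of_nat 2 * (dq x * qp x ^ (2 - Suc 0))))/(qp x^2 * qp x^2))
      = 64/3*(dR4 x * qp x - 2 * R4 x * dq x)/qp x^3"
      using q by (simp add: field_simps power2_eq_square power3_eq_cube)
    ultimately show ?thesis unfolding Dphi_def by simp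
  qed
  show ?thesis using d e by simp
qed

lemma aux1: "(q::real) \<noteq> 0 \<Longrightarrow> p \<noteq> 0 \<Longrightarrow> 64/3*(dr*q - 2*r*d)/q^3 - 1664/9*d/q + 1920/p
   = (3*(dr*q-2*r*d)*p*64 - 1664*d*q^2*p + 17280*q^3)/(9*q^3*p)"
  by (simp add: field_simps power2_eq_square power3_eq_cube)

lemma aux2: "(q::real) \<noteq> 0 \<Longrightarrow> p \<noteq> 0 \<Longrightarrow> y*(25270*512/q^3 - 17894*64/q^2 + 832*8/q)
   = (9*p*y*(25270*512 - 17894*64*q + 832*8*q^2))/(9*q^3*p)"
  by (simp add: field_simps power2_eq_square power3_eq_cube)

lemma Dphi_Ff: "Dphi x = Ff x"
proof -
  have q: "qp x > 0" by (rule qp_pos)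
  have p: "1 + 3*x^2 > (0::real)" by (simp add: add_pos_nonneg)
  have 1: "Dphi x = (3*(dR4 x * qp x - 2 * R4 x * dq x)*(1+3*x^2)*64 - 1664 * dq x * (qp x)^2 *(1+3*x^2) + 17280 * (qp x)^3)
     / (9 * qp x^3 * (1+3*x^2))"
    unfolding Dphi_def using q p by (intro aux1) auto
  have 2: "Ff x = (9 * (1+3*x^2) * (1-x)^3*(25270*512 - 17894*64*qp x + 832*8*qp x^2)) / (9 * qp x^3 * (1+3*x^2))"
    unfolding Ff_eq using q p by (intro aux2) auto
  show ?thesis unfolding 1 2 poly_id ..
qed


lemma arctan_sqrt3: "arctan (sqrt 3) = pi/3"
proof (rule arctan_unique)
  show "-(pi/2) < pi/3" using pi_gt_zero by linarith
  show "pi/3 < pi/2" using pi_gt_zero by linarith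
qed (rule tan_60)

lemma Ff_integral: "(Ff has_integral (1944 + 640 / sqrt 3 * pi)) {0..1}"
proof -
  have "(Ff has_integral (Phi 1 - Phi 0)) {0..1}"
  proof (rule fundamental_theorem_of_calculus)
    fix x :: real assume "x \<in> {0..1}"
    have "(Phi has_real_derivative Ff x) (at x)" using Phi_deriv[of x] Dphi_Ff[of x] by simp
    then show "(Phi has_vector_derivative Ff x) (at x within {0..1})"
      by (simp add: has_real_derivative_iff_has_vector_derivative has_vector_derivative_at_within)
  qed simp
  moreover have "Phi 1 - Phi 0 = 1944 + 640 / sqrt 3 * pi"
    unfolding Phi_def by (simp add: qp_def R4_def arctan_sqrt3)
  ultimately show ?thesis by simp
qed

lemma aux4: "(w::real) \<noteq> 0 \<Longrightarrow> (0*w^2 - 1*(of_nat 2*((0-1)*w^(2-Suc 0))))/(w^2*w^2) = 2/w^3"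
  by (simp add: power2_eq_square power3_eq_cube field_simps)

lemma aux5: "(1::real) \<le> r \<Longrightarrow> 5259*r \<le> 12635*r^2"
proof -
  assume r: "1 \<le> r"
  have "r \<le> r * r" using mult_left_mono[of 1 r r] r by simp
  then show ?thesis unfolding power2_eq_square using r by linarith
qed

lemma sums3:
  fixes z :: real
  assumes "norm z < 1"
  shows "(\<lambda>n. of_nat (Suc n * Suc (Suc n)) * z^n) sums (2/(1-z)^3)"
proof -
  have "(\<lambda>n. diffs (\<lambda>n. of_nat (Suc n)) n * z^n) sums (2/(1-z)^3)"
  proof (rule termdiffs_sums_strong[where K=1 and f="\<lambda>z. 1/(1-z)^2"])
    fix z :: real assume "norm z < 1"
    thus "(\<lambda>n. of_nat (Suc n) * z^n) sums (1 / (1 - z)^2)" by (rule geometric_deriv_sums)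
  next
    have w: "1 - z \<noteq> 0" using assms by auto
    have "((\<lambda>z. 1/(1-z)^2) has_field_derivative
       (0 * (1-z)^2 - 1 * (of_nat 2 * ((0 - 1) * (1-z)^(2 - Suc 0))))/((1-z)^2*(1-z)^2)) (at z)"
      by (rule DERIV_divide[OF DERIV_const DERIV_power[OF DERIV_diff[OF DERIV_const DERIV_ident]]]) (use w in simp)
    moreover have "(0 * (1-z)^2 - 1 * (of_nat 2 * ((0 - 1) * (1-z)^(2 - Suc 0))))/((1-z)^2*(1-z)^2) = 2/(1-z)^3"
      using aux4[OF w] .
    ultimately show "((\<lambda>z. 1/(1-z)^2) has_field_derivative 2/(1-z)^3) (at z)" by simp
  qed (use assms in auto)
  moreover have "\<And>n. diffs (\<lambda>n. of_nat (Suc n)) n = (of_nat (Suc n * Suc (Suc n)) :: real)"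
    by (simp add: diffs_def algebra_simps)
  ultimately show ?thesis by simp
qed

definition gg :: "nat \<Rightarrow> real \<Rightarrow> real" where
  "gg n x = (12635 * real (Suc n) ^ 2 - 5259 * real (Suc n) + 832) * (9/8)^n * (x^n * (1-x)^(3*Suc n))"

lemma tt_bounds: "x \<in> {0..1} \<Longrightarrow> 0 \<le> tt x \<and> tt x < 1"
  using tt_eq[of x] qp_pos[of x] unfolding tt_def by auto

lemma gg_eq: "gg n x = (1-x)^3 * (12635 * (of_nat (Suc n * Suc (Suc n)) * tt x^n)
   - 17894 * (of_nat (Suc n) * tt x^n) + 832 * tt x^n)"
proof -
  have "tt x ^ n = (9/8)^n * (x^n * (1-x)^(3*n))"
    unfolding tt_def by (simp add: power_mult_distrib power_mult power_divide)
  moreover have "(1-x)^(3*Suc n) = (1-x)^3 * (1-x)^(3*n)"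
    by (simp add: power_add[symmetric])
  ultimately show ?thesis unfolding gg_def by (simp add: algebra_simps power2_eq_square)
qed

lemma gg_sums: "x \<in> {0..1} \<Longrightarrow> (\<lambda>n. gg n x) sums Ff x"
proof -
  assume x: "x \<in> {0..1}"
  then have n: "norm (tt x) < 1" using tt_bounds[OF x] by auto
  have "(\<lambda>n. (1-x)^3 * (12635 * (of_nat (Suc n * Suc (Suc n)) * tt x^n)
   - 17894 * (of_nat (Suc n) * tt x^n) + 832 * tt x^n)) sums
     ((1-x)^3 * (12635 * (2/(1-tt x)^3) - 17894 * (1/(1-tt x)^2) + 832 * (1/(1-tt x))))"
    by (intro sums_mult sums_add sums_diff sums3 geometric_deriv_sums geometric_sums n)
  then show ?thesis unfolding gg_eq Ff_def by simp
qed

lemma gg_nonneg: "x \<in> {0..1} \<Longrightarrow> 0 \<le> gg n x"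
proof -
  assume x: "x \<in> {0..1}"
  have "5259 * real (Suc n) \<le> 12635 * real (Suc n) ^ 2"
    by (rule aux5) simp
  then show ?thesis unfolding gg_def using x by (intro mult_nonneg_nonneg) auto
qed

lemma Beta_nat: "Beta (real n + 1) (real (3 * Suc n) + 1) = fact n * fact (3 * Suc n) / fact (4 * Suc n)"
proof -
  have 1: "Gamma (real n + 1) = fact n" using Gamma_fact[of n] by (simp add: add.commute)
  have 2: "Gamma (real (3 * Suc n) + 1) = fact (3 * Suc n)" using Gamma_fact[of "3 * Suc n"] by (simp add: add.commute)
  have 3: "Gamma (real n + 1 + (real (3 * Suc n) + 1)) = fact (4 * Suc n)"
  proof -
    have "real n + 1 + (real (3 * Suc n) + 1) = 1 + of_nat (4 * Suc n)" by simp
    then show ?thesis using Gamma_fact[of "4 * Suc n"] by simp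
  qed
  show ?thesis unfolding Beta_def 1 2 3 ..
qed

lemma aux3: "(F4::real) \<noteq> 0 \<Longrightarrow> Fn \<noteq> 0 \<Longrightarrow> F3 \<noteq> 0 \<Longrightarrow> k \<noteq> 0 \<Longrightarrow> 1/(k * (F4/((k*Fn)*F3))) = Fn*F3/F4"
  by (simp add: field_simps)

lemma binom_inv: "1 / (real (Suc n) * real ((4 * Suc n) choose (Suc n))) = fact n * fact (3 * Suc n) / fact (4 * Suc n)"
proof -
  have "real ((4 * Suc n) choose (Suc n)) = fact (4 * Suc n) / (fact (Suc n) * fact (4 * Suc n - Suc n))"
    by (rule binomial_fact) simp
  also have "4 * Suc n - Suc n = 3 * Suc n" by simp
  also have "(fact (Suc n) :: real) = real (Suc n) * fact n" by (rule fact_Suc)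
  finally have C: "real ((4 * Suc n) choose (Suc n)) = fact (4 * Suc n) / ((real (Suc n) * fact n) * fact (3 * Suc n))" .
  show ?thesis unfolding C by (rule aux3) auto
qed

lemma gg_integral: "(gg n has_integral (let k = Suc n in
            (12635 * real k ^ 2 - 5259 * real k + 832) / (real k * real ((4 * k) choose k))
            * (9 / 8) ^ (k - 1))) {0..1}"
proof -
  have B: "((\<lambda>t. t powr (real n + 1 - 1) * (1 - t) powr (real (3 * Suc n) + 1 - 1)) has_integral
      Beta (real n + 1) (real (3 * Suc n) + 1)) {0..1}"
    by (rule has_integral_Beta_real) auto
  have B2: "((\<lambda>t. t^n * (1-t)^(3 * Suc n)) has_integral
      Beta (real n + 1) (real (3 * Suc n) + 1)) {0..1}"
  proof (rule has_integral_spike_finite[OF _ _ B])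
    fix x assume x: "x \<in> {0..1} - {0::real}"
    then have "x > 0" by auto
    then have a: "x powr (real n + 1 - 1) = x^n" by (simp add: powr_realpow)
    have b: "(1 - x) powr (real (3 * Suc n) + 1 - 1) = (1-x)^(3 * Suc n)"
    proof (cases "x = 1")
      case True then show ?thesis by simp
    next
      case False then have "1 - x > 0" using x by auto
      have e: "real (3 * Suc n) + 1 - 1 = real (3 * Suc n)" by simp
      show ?thesis unfolding e by (rule powr_realpow) fact
    qed
    show "x^n * (1-x)^(3 * Suc n) = x powr (real n + 1 - 1) * (1 - x) powr (real (3 * Suc n) + 1 - 1)"
      using a b by simp
  qed simp
  have "(gg n has_integral ((12635 * real (Suc n) ^ 2 - 5259 * real (Suc n) + 832) * (9/8)^n *
      Beta (real n + 1) (real (3 * Suc n) + 1))) {0..1}"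
    unfolding gg_def[abs_def] by (rule has_integral_mult_right[OF B2])
  moreover have "(12635 * real (Suc n) ^ 2 - 5259 * real (Suc n) + 832) * (9/8)^n *
      Beta (real n + 1) (real (3 * Suc n) + 1) = (let k = Suc n in
            (12635 * real k ^ 2 - 5259 * real k + 832) / (real k * real ((4 * k) choose k))
            * (9 / 8) ^ (k - 1))"
  proof -
    have "(12635 * real (Suc n) ^ 2 - 5259 * real (Suc n) + 832) / (real (Suc n) * real ((4 * Suc n) choose (Suc n)))
       = (12635 * real (Suc n) ^ 2 - 5259 * real (Suc n) + 832) * (1 / (real (Suc n) * real ((4 * Suc n) choose (Suc n))))"
      by simp
    then show ?thesis unfolding Let_def Beta_nat binom_inv by simp
  qed
  ultimately show ?thesis by simp
qed


theorem lemma2p2: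
  shows "(\<lambda>n. let k = Suc n in
            (12635 * real k ^ 2 - 5259 * real k + 832) / (real k * real ((4 * k) choose k))
            * (9 / 8) ^ (k - 1))
         sums (1944 + 640 / sqrt 3 * pi)"
proof -
  define s where "s = (\<lambda>n. let k = Suc n in
            (12635 * real k ^ 2 - 5259 * real k + 832) / (real k * real ((4 * k) choose k))
            * (9 / 8) ^ (k - 1))"
  define f where "f = (\<lambda>N x. \<Sum>n<N. gg n x)"
  have fi: "(f N has_integral (\<Sum>n<N. s n)) {0..1}" for N
    unfolding f_def s_def by (intro has_integral_sum gg_integral) auto
  have "f N integrable_on {0..1}" for N using fi by blast
  moreover have "Ff integrable_on {0..1}" using Ff_integral by blast
  moreover have "norm (f N x) \<le> Ff x" if x: "x \<in> {0..1}" for N x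
  proof -
    have "0 \<le> f N x" unfolding f_def using gg_nonneg[OF x] by (intro sum_nonneg) auto
    moreover have "f N x \<le> Ff x"
      unfolding f_def sums_unique[OF gg_sums[OF x]]
      by (rule sum_le_suminf) (use gg_sums[OF x] gg_nonneg[OF x] in \<open>auto simp: sums_iff\<close>)
    ultimately show ?thesis by simp
  qed
  moreover have "(\<lambda>N. f N x) \<longlonglongrightarrow> Ff x" if x: "x \<in> {0..1}" for x
    using gg_sums[OF x] unfolding f_def sums_def .
  ultimately have "(\<lambda>N. integral {0..1} (f N)) \<longlonglongrightarrow> integral {0..1} Ff"
    by (intro dominated_convergence(2)[where h=Ff]) auto
  moreover have "integral {0..1} (f N) = (\<Sum>n<N. s n)" for N using fi by (rule integral_unique)
  moreover have "integral {0..1} Ff = 1944 + 640 / sqrt 3 * pi" using Ff_integral by (rule integral_unique)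
  ultimately have "(\<lambda>N. \<Sum>n<N. s n) \<longlonglongrightarrow> 1944 + 640 / sqrt 3 * pi" by simp
  then show ?thesis unfolding s_def sums_def .
qed

end
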